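(* Let $U=U_1\times\cdots\times U_m\subset\mathbb{R}^m_+$ with each $U_i\subseteq\mathbb{R}$, let $C\subseteq\mathbb{R}^m$ and $\overline{U}=U\cap C$, and assume $U$ and $\overline{U}$ are convex compact sets. Let $c\in\mathbb{R}^{n_1}$, $d\in\mathbb{R}^{n_2}$, $a_i\in\mathbb{R}^{n_1}$, $g_i\in\mathbb{R}^{n_2}$ ($i\in[m]$). Let $$z_{\rm cp}=\inf_{x,y}\{c^Tx+d^Ty:\ a_i^Tx+g_i^Ty\ge u_i\ \forall u\in\overline{U},\ \forall i\in[m]\},$$ and for a set $S$ let $$z(S)=\inf_{x\in\mathbb{R}^{n_1},\ y:S\to\mathbb{R}^{n_2}}\Big\{c^Tx+\sup_{u\in S}d^Ty(u):\ a_i^Tx+g_i^Ty(u)\ge u_i\ \forall u\in S,\ \forall i\in[m]\Big\},\qquad z_{\rm acp}=z(\overline{U}).$$ Assume the following compactness condition holds for the adaptive problem under $\Pi(\overline{U}^\downarrow)$: for every $x$ that is the first-stage part of some feasible solution of the problem defining $z(\Pi(\overline{U}^\downarrow))$, there is a compact set $Y_x\subseteq\mathbb{R}^{n_2}$ such that for every $u\in\Pi(\overline{U}^\downarrow)$ and $y\in\mathbb{R}^{n_2}$, if $a_i^Tx+g_i^Ty\ge u_i$ for all $i\in[m]$ then $y\in Y_x$. Suppose $0<z_{\rm acp}\le z_{\rm cp}<\infty$. Then, with $\rho_{\rm adapt}=\rho\big(\Pi(\overline{U}^\downarrow),\overline{U}^\downarrow\big)$, $$\frac{z_{\rm acp}}{z_{\rm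 cp}}\ge\rho_{\rm adapt}.$$
   Context: $[m]=\{1,\dots,m\}$. For $S\subseteq\mathbb{R}^m_+$, $S^\downarrow=\{t\in\mathbb{R}^m_+:\exists s\in S,\ t\le s\text{ componentwise}\}$. For $S\subseteq\mathbb{R}^m$, $\Pi_i(S)$ is the projection of $S$ onto the $i$-th coordinate and $\Pi(S)=\Pi_1(S)\times\cdots\times\Pi_m(S)$. For $r\ge0$, $rS=\{rx:x\in S\}$; $\rho(S_1,S_2)=\max\{\rho\ge0:\rho S_1\subseteq S_2\}$. *)

theory Defs
  imports "HOL-Analysis.Analysis"
begin

text \<open>Index set [m] is the finite type 'm; vectors in R^m are real^'m.\<close>

definition down_closure :: "(real^'m) set \<Rightarrow> (real^'m) set" where
  "down_closure S = {t. (\<forall>i. 0 \<le> t$i) \<and> (\<exists>s\<in>S. \<forall>i. t$i \<le> s$i)}"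

definition coord_proj :: "(real^'m) set \<Rightarrow> 'm \<Rightarrow> real set" where
  "coord_proj S i = (\<lambda>s. s$i) ` S"

definition proj_hull :: "(real^'m) set \<Rightarrow> (real^'m) set" where
  "proj_hull S = {u. \<forall>i. u$i \<in> coord_proj S i}"

text \<open>rho(S1,S2) = max{r >= 0. r S1 \<subseteq> S2}, written as a supremum (equal to the max when attained).\<close>
definition scale_factor :: "(real^'m) set \<Rightarrow> (real^'m) set \<Rightarrow> real" where
  "scale_factor S1 S2 = Sup {r. 0 \<le> r \<and> (\<lambda>x. r *\<^sub>R x) ` S1 \<subseteq> S2}"

definition adapt_feasible ::
  "('m \<Rightarrow> real^'n1) \<Rightarrow> ('m \<Rightarrow> real^'n2) \<Rightarrow> (real^'m) set \<Rightarrow> real^'n1 \<Rightarrow> (real^'m \<Rightarrow> real^'n2) \<Rightarrow> bool" where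
  "adapt_feasible a g S x y \<longleftrightarrow> (\<forall>u\<in>S. \<forall>i. a i \<bullet> x + g i \<bullet> y u \<ge> u$i)"

definition z_adapt ::
  "real^'n1 \<Rightarrow> real^'n2 \<Rightarrow> ('m \<Rightarrow> real^'n1) \<Rightarrow> ('m \<Rightarrow> real^'n2) \<Rightarrow> (real^'m) set \<Rightarrow> ereal" where
  "z_adapt c d a g S = Inf {ereal (c \<bullet> x) + (SUP u\<in>S. ereal (d \<bullet> y u)) | x y. adapt_feasible a g S x y}"

definition z_static ::
  "real^'n1 \<Rightarrow> real^'n2 \<Rightarrow> ('m \<Rightarrow> real^'n1) \<Rightarrow> ('m \<Rightarrow> real^'n2) \<Rightarrow> (real^'m) set \<Rightarrow> ereal" where
  "z_static c d a g S = Inf {ereal (c \<bullet> x + d \<bullet> y) | x y. \<forall>u\<in>S. \<forall>i. a i \<bullet> x + g i \<bullet> y \<ge> u$i}"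

end

theory Submission
  imports Defs
begin

theorem theorem3:
  fixes Ui :: "'m::finite \<Rightarrow> real set"
    and C :: "(real^'m) set"
    and c :: "real^'n1" and d :: "real^'n2"
    and a :: "'m \<Rightarrow> real^'n1" and g :: "'m \<Rightarrow> real^'n2"
  defines "U \<equiv> {u. \<forall>i. u$i \<in> Ui i}"
  defines "Ubar \<equiv> U \<inter> C"
  assumes U_nonneg: "\<forall>u\<in>U. \<forall>i. 0 \<le> u$i"
    and "convex U" and "compact U"
    and "convex Ubar" and cUbar: "compact Ubar"
    and compactness: "\<forall>x. (\<exists>y. adapt_feasible a g (proj_hull (down_closure Ubar)) x y) \<longrightarrow>
        (\<exists>Y :: (real^'n2) set. compact Y \<and>
           (\<forall>u\<in>proj_hull (down_closure Ubar). \<forall>y. (\<forall>i. a i \<bullet> x + g i \<bullet> y \<ge> u$i) \<longrightarrow> y \<in> Y))"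
    and zpos: "0 < z_adapt c d a g Ubar"
    and zle: "z_adapt c d a g Ubar \<le> z_static c d a g Ubar"
    and zfin: "z_static c d a g Ubar < \<infinity>"
  shows "real_of_ereal (z_adapt c d a g Ubar) / real_of_ereal (z_static c d a g Ubar)
           \<ge> scale_factor (proj_hull (down_closure Ubar)) (down_closure Ubar)"
proof -
  let ?P = "proj_hull (down_closure Ubar)"
  let ?D = "down_closure Ubar"
  let ?za = "z_adapt c d a g Ubar"
  let ?zs = "z_static c d a g Ubar"
  have nn: "\<forall>u\<in>Ubar. \<forall>i. 0 \<le> u$i" using U_nonneg unfolding Ubar_def by auto
  have ne: "Ubar \<noteq> {}"
  proof
    assume e: "Ubar = {}"
    have "adapt_feasible a g Ubar 0 (\<lambda>_. 0)" using e by (simp add: adapt_feasible_def)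
    hence "?za \<le> ereal (c \<bullet> 0) + (SUP u\<in>Ubar. ereal (d \<bullet> (\<lambda>_. (0::real^'n2)) u))"
      unfolding z_adapt_def by (intro Inf_lower) (rule CollectI, rule exI[of _ 0], rule exI[of _ "\<lambda>_. 0"], simp)
    also have "\<dots> = - \<infinity>" using e by (simp add: bot_ereal_def)
    finally show False using zpos by simp
  qed
  have "\<forall>i. \<exists>s\<in>Ubar. \<forall>u\<in>Ubar. u$i \<le> s$i"
  proof
    fix i
    have "compact ((\<lambda>s. s$i) ` Ubar)"
      by (intro compact_continuous_image continuous_intros) (use cUbar in auto)
    then obtain m where "m \<in> (\<lambda>s. s$i) ` Ubar" "\<forall>y\<in>(\<lambda>s. s$i) ` Ubar. y \<le> m"
      using compact_attains_sup ne by (metis image_is_empty)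
    thus "\<exists>s\<in>Ubar. \<forall>u\<in>Ubar. u$i \<le> s$i" by auto
  qed
  then obtain f where f: "\<And>i. f i \<in> Ubar" "\<And>i u. u \<in> Ubar \<Longrightarrow> u$i \<le> (f i)$i"
    by metis
  define us where "us = (\<chi> i. (f i)$i)"
  have usP: "us \<in> ?P"
    unfolding proj_hull_def coord_proj_def
  proof (safe)
    fix i
    have "f i \<in> ?D" using f(1) nn unfolding down_closure_def by blast
    thus "us $ i \<in> (\<lambda>s. s$i) ` ?D" unfolding us_def by force
  qed
  have key: "ereal r * ?zs \<le> ?za" if r: "0 \<le> r" "(\<lambda>x. r *\<^sub>R x) ` ?P \<subseteq> ?D" for r
  proof (cases "r = 0")
    case True
    then show ?thesis using zpos by (simp add: zero_ereal_def[symmetric])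
  next
    case False
    hence rp: "r > 0" using r by simp
    have "r *\<^sub>R us \<in> ?D" using r usP by blast
    then obtain s where s: "s \<in> Ubar" "\<And>i. r * us$i \<le> s$i"
      unfolding down_closure_def by auto
    show ?thesis unfolding z_adapt_def
    proof (rule Inf_greatest, clarify)
      fix x y assume fe: "adapt_feasible a g Ubar x y"
      have "\<forall>u\<in>Ubar. \<forall>i. a i \<bullet> ((1/r) *\<^sub>R x) + g i \<bullet> ((1/r) *\<^sub>R y s) \<ge> u$i"
      proof (intro ballI allI)
        fix u i assume u: "u \<in> Ubar"
        have "u$i \<le> us$i" using f(2)[OF u] by (simp add: us_def)
        also have "\<dots> \<le> s$i / r" using s(2)[of i] rp by (simp add: field_simps)
        also have "\<dots> \<le> (a i \<bullet> x + g i \<bullet> y s) / r"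
          using fe s(1) rp unfolding adapt_feasible_def by (simp add: divide_right_mono)
        also have "\<dots> = a i \<bullet> ((1/r) *\<^sub>R x) + g i \<bullet> ((1/r) *\<^sub>R y s)"
          by (simp add: add_divide_distrib)
        finally show "a i \<bullet> ((1/r) *\<^sub>R x) + g i \<bullet> ((1/r) *\<^sub>R y s) \<ge> u$i" .
      qed
      hence "?zs \<le> ereal (c \<bullet> ((1/r) *\<^sub>R x) + d \<bullet> ((1/r) *\<^sub>R y s))"
        unfolding z_static_def by (intro Inf_lower) blast
      hence "ereal r * ?zs \<le> ereal r * ereal (c \<bullet> ((1/r) *\<^sub>R x) + d \<bullet> ((1/r) *\<^sub>R y s))"
        by (intro ereal_mult_left_mono) (use r in auto)
      also have "\<dots> = ereal (c \<bullet> x) + ereal (d \<bullet> y s)"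
        using rp by (simp add: field_simps)
      also have "\<dots> \<le> ereal (c \<bullet> x) + (SUP u\<in>Ubar. ereal (d \<bullet> y u))"
        by (intro add_left_mono SUP_upper s(1))
      finally show "ereal r * ?zs \<le> ereal (c \<bullet> x) + (SUP u\<in>Ubar. ereal (d \<bullet> y u))" .
    qed
  qed
  obtain A where A: "?za = ereal A" "A > 0"
    using zpos zle zfin by (cases ?za) auto
  obtain B where B: "?zs = ereal B" "B > 0"
    using zpos zle zfin A by (cases ?zs) auto
  show ?thesis unfolding scale_factor_def
  proof (rule cSup_least)
    have "(\<lambda>x. 0 *\<^sub>R x) ` ?P \<subseteq> ?D"
      using f(1) nn unfolding down_closure_def by fastforce
    thus "{r. 0 \<le> r \<and> (\<lambda>x. r *\<^sub>R x) ` ?P \<subseteq> ?D} \<noteq> {}" by blast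
  next
    fix r assume "r \<in> {r. 0 \<le> r \<and> (\<lambda>x. r *\<^sub>R x) ` ?P \<subseteq> ?D}"
    hence "ereal r * ereal B \<le> ereal A" using key A B by auto
    hence "r * B \<le> A" by simp
    thus "r \<le> real_of_ereal ?za / real_of_ereal ?zs" using A B by (simp add: field_simps)
  qed
qed

end
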